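(* Let $n\ge1$, $X=\{0,1,\dots,n-1\}$, $f:X\to X$ any function, and $s\in X$. Let $(x_0,x_1,\dots)$ be the state sequence of the counter-assisted generator: $x_0=s$ and $x_i=f(x_{i-1})+i \pmod n$ for $i\ge1$. Then for all indices $i,j\ge0$ with $i\not\equiv j\pmod n$: if $x_i=x_j$ then $x_{i+1}\neq x_{j+1}$, and, if moreover $i,j\ge1$, also $x_{i-1}\neq x_{j-1}$.
   Context: Addition in $X$ is carried out modulo $n$. *)

theory Defs
  imports Main
begin

fun cag_state :: "nat \<Rightarrow> (nat \<Rightarrow> nat) \<Rightarrow> nat \<Rightarrow> nat \<Rightarrow> nat" where
  "cag_state n f s 0 = s"
| "cag_state n f s (Suc i) = (f (cag_state n f s i) + Suc i) mod n"

end

theory Submission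
  imports Defs "HOL-Number_Theory.Cong"
begin

lemma cancel_aux: "((c::nat) + a) mod n = (c + b) mod n \<Longrightarrow> a mod n = b mod n"
  using cong_add_lcancel_nat[of c a b n] unfolding cong_def by blast

lemma step_eq: "cag_state n f s (Suc k) = (f (cag_state n f s k) + Suc k) mod n"
  by (rule cag_state.simps(2))

theorem mainTheorem2:
  fixes n s :: nat and f :: "nat \<Rightarrow> nat" and i j :: nat
  assumes "n \<ge> 1"
    and "\<forall>x\<in>{0..<n}. f x \<in> {0..<n}"
    and "s \<in> {0..<n}"
    and "i mod n \<noteq> j mod n"
    and "cag_state n f s i = cag_state n f s j"
  shows "cag_state n f s (i + 1) \<noteq> cag_state n f s (j + 1)
     \<and> (i \<ge> 1 \<and> j \<ge> 1 \<longrightarrow> cag_state n f s (i - 1) \<noteq> cag_state n f s (j - 1))"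
proof
  have sc: "\<And>a b. Suc a mod n = Suc b mod n \<Longrightarrow> a mod n = b mod n"
  proof -
    fix a b assume "Suc a mod n = Suc b mod n"
    hence "(1 + a) mod n = (1 + b) mod n" by (metis Suc_eq_plus1_left)
    thus "a mod n = b mod n" by (rule cancel_aux)
  qed
  show "cag_state n f s (i + 1) \<noteq> cag_state n f s (j + 1)"
  proof
    assume e: "cag_state n f s (i + 1) = cag_state n f s (j + 1)"
    have "(f (cag_state n f s i) + Suc i) mod n = (f (cag_state n f s i) + Suc j) mod n"
      using e step_eq[of n f s i] step_eq[of n f s j] assms(5) by (metis Suc_eq_plus1)
    then have "Suc i mod n = Suc j mod n" by (rule cancel_aux)
    then show False using assms(4) sc by blast
  qed
  show "i \<ge> 1 \<and> j \<ge> 1 \<longrightarrow> cag_state n f s (i - 1) \<noteq> cag_state n f s (j - 1)"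
  proof (intro impI notI)
    assume h: "i \<ge> 1 \<and> j \<ge> 1" and e: "cag_state n f s (i - 1) = cag_state n f s (j - 1)"
    obtain a where a: "i = Suc a" using h by (cases i) auto
    obtain b where b: "j = Suc b" using h by (cases j) auto
    have e': "cag_state n f s a = cag_state n f s b" using e a b by simp
    have "(f (cag_state n f s a) + Suc a) mod n = (f (cag_state n f s a) + Suc b) mod n"
      using assms(5) e' step_eq[of n f s a] step_eq[of n f s b] a b by metis
    then have "Suc a mod n = Suc b mod n" by (rule cancel_aux)
    then show False using assms(4) a b sc by blast
  qed
qed

end
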